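(* If a non-P-point $\mathcal W$ in standard position on $\omega^2$ is $(2,4)$-weakly Ramsey, then $\mathcal W$ has the three-functions property: for every function $f$ on $\omega^2$ there is $H\in\mathcal W$ such that $f\restriction H$ is constant, or one-to-one, or equal to $g\circ\pi_1\restriction H$ for some one-to-one function $g$ on $\omega$.
   Context: Ultrafilters are nonprincipal. $\pi_1:\omega^2\to\omega$ is the first projection. A non-P-point in standard position is an ultrafilter $\mathcal W$ on $\omega^2$ such that $\pi_1$ is neither finite-to-one nor constant on any set in $\mathcal W$. $\mathcal W$ is $(n,t)$-weakly Ramsey if whenever $[\omega^2]^n$ is partitioned into finitely many pieces there is $H\in\mathcal W$ with $[H]^n$ meeting at most $t$ pieces. *)

theory Defs
  imports Main "HOL-Library.Ramsey"
begin

definition is_ultrafilter :: "'a set set \<Rightarrow> bool" where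
  "is_ultrafilter U \<longleftrightarrow>
     {} \<notin> U \<and> UNIV \<in> U \<and>
     (\<forall>A B. A \<in> U \<and> A \<subseteq> B \<longrightarrow> B \<in> U) \<and>
     (\<forall>A B. A \<in> U \<and> B \<in> U \<longrightarrow> A \<inter> B \<in> U) \<and>
     (\<forall>A. A \<in> U \<or> - A \<in> U)"

definition nonprincipal_ultrafilter :: "'a set set \<Rightarrow> bool" where
  "nonprincipal_ultrafilter U \<longleftrightarrow> is_ultrafilter U \<and> (\<forall>A\<in>U. infinite A)"

definition non_P_point_std :: "(nat \<times> nat) set set \<Rightarrow> bool" where
  "non_P_point_std W \<longleftrightarrow> nonprincipal_ultrafilter W \<and>
     (\<forall>A\<in>W. \<not> (\<forall>n. finite {x\<in>A. fst x = n}) \<and> \<not> (\<exists>n. \<forall>x\<in>A. fst x = n))"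

text \<open>(n,t)-weakly Ramsey: for every partition of [omega^2]^n into finitely many
  pieces (given by a colouring c with values below k) there is H in W such that
  [H]^n meets at most t pieces.\<close>
definition weakly_Ramsey :: "nat \<Rightarrow> nat \<Rightarrow> 'a set set \<Rightarrow> bool" where
  "weakly_Ramsey n t W \<longleftrightarrow>
     (\<forall>(c :: 'a set \<Rightarrow> nat) k. (\<forall>s\<in>[UNIV]\<^bsup>n\<^esup>. c s < k) \<longrightarrow>
        (\<exists>H\<in>W. card (c ` [H]\<^bsup>n\<^esup>) \<le> t))"

definition three_functions_property :: "(nat \<times> nat) set set \<Rightarrow> bool" where
  "three_functions_property W \<longleftrightarrow>
     (\<forall>f :: nat \<times> nat \<Rightarrow> nat. \<exists>H\<in>W.
        (\<exists>c. \<forall>x\<in>H. f x = c) \<or> inj_on f H \<or>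
        (\<exists>g :: nat \<Rightarrow> nat. inj g \<and> (\<forall>x\<in>H. f x = g (fst x))))"

end

theory Submission
  imports Defs
begin

definition lx :: "nat \<times> nat \<Rightarrow> nat \<times> nat \<Rightarrow> bool" where
  "lx x y \<longleftrightarrow> fst x < fst y \<or> (fst x = fst y \<and> snd x < snd y)"

definition rel :: "nat \<Rightarrow> nat \<Rightarrow> nat" where
  "rel u v = (if u = v then 0 else if u < v then 1 else 2)"

definition colxy :: "(nat \<times> nat \<Rightarrow> nat) \<Rightarrow> nat \<times> nat \<Rightarrow> nat \<times> nat \<Rightarrow> nat" where
  "colxy f x y = (if fst x = fst y then rel (f x) (f y)
     else 3 + 4 * rel (f x) (f y) + (if snd x < snd y then 2 else 0) + (if snd x < fst y then 1 else 0))"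

definition colr :: "(nat \<times> nat \<Rightarrow> nat) \<Rightarrow> (nat \<times> nat) set \<Rightarrow> nat" where
  "colr f s = (SOME v. \<exists>x y. s = {x,y} \<and> lx x y \<and> v = colxy f x y)"

lemma rel_le: "rel u v \<le> 2" by (simp add: rel_def)

lemma colxy_less: "colxy f x y < 15"
  using rel_le[of "f x" "f y"] by (simp add: colxy_def)

lemma lx_total: "x \<noteq> y \<Longrightarrow> lx x y \<or> lx y x"
  by (auto simp: lx_def prod_eq_iff)

lemma lx_ne: "lx x y \<Longrightarrow> x \<noteq> y" by (auto simp: lx_def)

lemma colr_eq: assumes "lx x y" shows "colr f {x,y} = colxy f x y"
proof -
  have asy: "\<And>a b. lx a b \<Longrightarrow> \<not> lx b a" by (auto simp: lx_def)
  have u: "\<And>x' y'. {x,y} = {x',y'} \<Longrightarrow> lx x' y' \<Longrightarrow> x' = x \<and> y' = y"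
  proof -
    fix x' y' assume e: "{x,y} = {x',y'}" and l: "lx x' y'"
    from e have "(x = x' \<and> y = y') \<or> (x = y' \<and> y = x')" by (simp add: doubleton_eq_iff)
    then show "x' = x \<and> y' = y" using asy[OF l] assms by auto
  qed
  have ex: "\<exists>v. \<exists>x' y'. {x,y} = {x',y'} \<and> lx x' y' \<and> v = colxy f x' y'" using assms by blast
  have "\<exists>x' y'. {x,y} = {x',y'} \<and> lx x' y' \<and> colr f {x,y} = colxy f x' y'"
    unfolding colr_def by (rule someI_ex[OF ex])
  then obtain x' y' where "{x,y} = {x',y'}" "lx x' y'" "colr f {x,y} = colxy f x' y'"
    by blast
  with u show ?thesis by simp
qed

lemma colr_bound: assumes "s \<in> [UNIV]\<^bsup>2\<^esup>" shows "colr f s < 15"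
proof -
  from assms have "card s = 2" by (simp add: nsets_def)
  then obtain x y where s: "s = {x,y}" "x \<noteq> y" unfolding card_2_iff by blast
  from lx_total[OF s(2)] show ?thesis
  proof
    assume "lx x y" then have "colr f s = colxy f x y" using s(1) by (simp add: colr_eq)
    then show ?thesis using colxy_less by simp
  next
    assume l: "lx y x" have "s = {y,x}" using s(1) by auto
    then have "colr f s = colxy f y x" using l by (simp add: colr_eq)
    then show ?thesis using colxy_less by simp
  qed
qed

lemma W_facts:
  assumes "non_P_point_std W"
  shows W_mono: "A \<in> W \<Longrightarrow> A \<subseteq> B \<Longrightarrow> B \<in> W"
    and W_int: "A \<in> W \<Longrightarrow> B \<in> W \<Longrightarrow> A \<inter> B \<in> W"
    and W_ne: "A \<in> W \<Longrightarrow> A \<noteq> {}"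
    and W_compl: "A \<in> W \<or> - A \<in> W"
    and W_nonconst: "A \<in> W \<Longrightarrow> \<not> (\<forall>x\<in>A. fst x = n)"
    and W_notfin: "A \<in> W \<Longrightarrow> \<not> (\<forall>n. finite {x\<in>A. fst x = n})"
proof -
  have u: "is_ultrafilter W" and np: "\<forall>A\<in>W. \<not> (\<forall>n. finite {x\<in>A. fst x = n}) \<and> \<not> (\<exists>n. \<forall>x\<in>A. fst x = n)"
    using assms unfolding non_P_point_std_def nonprincipal_ultrafilter_def by auto
  have e: "{} \<notin> W" and m: "\<forall>A B. A \<in> W \<and> A \<subseteq> B \<longrightarrow> B \<in> W"
    and i: "\<forall>A B. A \<in> W \<and> B \<in> W \<longrightarrow> A \<inter> B \<in> W" and c: "\<forall>A. A \<in> W \<or> - A \<in> W"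
    using u unfolding is_ultrafilter_def by auto
  show "A \<in> W \<Longrightarrow> A \<subseteq> B \<Longrightarrow> B \<in> W" using m by blast
  show "A \<in> W \<Longrightarrow> B \<in> W \<Longrightarrow> A \<inter> B \<in> W" using i by blast
  show "A \<in> W \<Longrightarrow> A \<noteq> {}" using e by blast
  show "A \<in> W \<or> - A \<in> W" using c by blast
  show "A \<in> W \<Longrightarrow> \<not> (\<forall>x\<in>A. fst x = n)" using np by blast
  show "A \<in> W \<Longrightarrow> \<not> (\<forall>n. finite {x\<in>A. fst x = n})" using np by blast
qed

lemma W_split:
  assumes "non_P_point_std W" "S \<in> W"
  shows "{x\<in>S. P x} \<in> W \<or> {x\<in>S. \<not> P x} \<in> W"
proof -
  have "{x. P x} \<in> W \<or> - {x. P x} \<in> W" using W_compl[OF assms(1)] .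
  then show ?thesis
  proof
    assume "{x. P x} \<in> W"
    from W_int[OF assms(1) assms(2) this] have "S \<inter> {x. P x} \<in> W" .
    moreover have "S \<inter> {x. P x} = {x\<in>S. P x}" by blast
    ultimately show ?thesis by simp
  next
    assume "- {x. P x} \<in> W"
    from W_int[OF assms(1) assms(2) this] have "S \<inter> - {x. P x} \<in> W" .
    moreover have "S \<inter> - {x. P x} = {x\<in>S. \<not> P x}" by blast
    ultimately show ?thesis by simp
  qed
qed

lemma W_unbounded:
  assumes np: "non_P_point_std W"
  shows "S \<in> W \<Longrightarrow> \<exists>x\<in>S. fst x > N"
proof (induction N arbitrary: S)
  case 0
  show ?case
  proof (rule ccontr)
    assume "\<not> ?case"
    then have "\<forall>x\<in>S. fst x = 0" by auto
    with W_nonconst[OF np 0] show False by blast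
  qed
next
  case (Suc N)
  show ?case
  proof (rule ccontr)
    assume c: "\<not> ?case"
    from W_split[OF np Suc.prems, of "\<lambda>x. fst x = Suc N"]
    show False
    proof
      assume "{x\<in>S. fst x = Suc N} \<in> W"
      with W_nonconst[OF np this, of "Suc N"] show False by auto
    next
      assume "{x\<in>S. fst x \<noteq> Suc N} \<in> W"
      from Suc.IH[OF this] c show False by auto
    qed
  qed
qed

lemma W_shrink:
  assumes np: "non_P_point_std W" and S: "S \<in> W"
  shows "{x\<in>S. infinite {y\<in>S. fst y = fst x}} \<in> W"
proof -
  from W_split[OF np S, of "\<lambda>x. infinite {y\<in>S. fst y = fst x}"]
  show ?thesis
  proof
    assume F: "{x\<in>S. \<not> infinite {y\<in>S. fst y = fst x}} \<in> W"
    have "\<forall>n. finite {x\<in>{x\<in>S. \<not> infinite {y\<in>S. fst y = fst x}}. fst x = n}"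
    proof
      fix n
      show "finite {x\<in>{x\<in>S. \<not> infinite {y\<in>S. fst y = fst x}}. fst x = n}"
      proof (cases "\<exists>x\<in>S. fst x = n \<and> finite {y\<in>S. fst y = fst x}")
        case True
        then obtain x where "x \<in> S" "fst x = n" and fx: "finite {y\<in>S. fst y = fst x}" by blast
        show ?thesis
        proof (rule finite_subset[OF _ fx])
          show "{x\<in>{x\<in>S. \<not> infinite {y\<in>S. fst y = fst x}}. fst x = n} \<subseteq> {y\<in>S. fst y = fst x}"
            using \<open>fst x = n\<close> by auto
        qed
      next
        case False
        then have "{x\<in>{x\<in>S. \<not> infinite {y\<in>S. fst y = fst x}}. fst x = n} = {}" by blast
        then show ?thesis by (metis finite.emptyI)
      qed
    qed
    with W_notfin[OF np F] show ?thesis by blast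
  qed simp
qed

lemma avoid: "infinite C \<Longrightarrow> finite F \<Longrightarrow> \<exists>y\<in>C. y \<notin> F"
proof -
  assume "infinite C" "finite F"
  then have "infinite (C - F)" using Diff_infinite_finite by blast
  then obtain y where "y \<in> C - F" using infinite_imp_nonempty by blast
  then show ?thesis by blast
qed

lemma fin_snd: "finite {y::nat\<times>nat. fst y = n \<and> snd y \<le> K}"
  by (rule finite_subset[of _ "{n} \<times> {..K}"]) auto

lemma arith5: "r1 \<noteq> r2 \<Longrightarrow> (e1::nat) \<le> 1 \<Longrightarrow> e2 \<le> 1 \<Longrightarrow>
  distinct [0::nat, 3+4*r1, 5+4*r1+e1, 3+4*r2, 5+4*r2+e2]"
  by simp

lemma rel0: "rel u v = 0 \<longleftrightarrow> u = v" by (simp add: rel_def)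

lemma three_f:
  fixes f :: "nat \<times> nat \<Rightarrow> nat" and W :: "(nat \<times> nat) set set"
  assumes np: "non_P_point_std W" and wr: "weakly_Ramsey 2 4 W"
  shows "\<exists>H\<in>W. (\<exists>c. \<forall>x\<in>H. f x = c) \<or> inj_on f H \<or> (\<exists>g::nat\<Rightarrow>nat. inj g \<and> (\<forall>x\<in>H. f x = g (fst x)))"
proof -
  have "\<forall>s\<in>[UNIV]\<^bsup>2\<^esup>. colr f s < 15" using colr_bound by blast
  with wr obtain H where HW: "H \<in> W" and cH: "card (colr f ` [H]\<^bsup>2\<^esup>) \<le> 4"
    unfolding weakly_Ramsey_def by blast
  define K where "K = colr f ` [H]\<^bsup>2\<^esup>"
  have "K \<subseteq> {..<15}"
  proof
    fix v assume "v \<in> K"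
    then obtain s where "s \<in> [H]\<^bsup>2\<^esup>" "v = colr f s" unfolding K_def by blast
    then have "s \<in> [UNIV]\<^bsup>2\<^esup>" by (simp add: nsets_def)
    with \<open>v = colr f s\<close> colr_bound show "v \<in> {..<15}" by simp
  qed
  then have finK: "finite K" using finite_subset by blast
  have cK: "card K \<le> 4" using cH unfolding K_def .
  have app: "colxy f x y \<in> K" if "x \<in> H" "y \<in> H" "lx x y" for x y
  proof -
    have "x \<noteq> y" using lx_ne[OF that(3)] .
    then have "{x,y} \<in> [H]\<^bsup>2\<^esup>" using that by (simp add: nsets_def)
    then have "colr f {x,y} \<in> K" unfolding K_def by blast
    then show ?thesis using colr_eq[OF that(3)] by simp
  qed
  have five: False if "a \<in> K" "b \<in> K" "c \<in> K" "d \<in> K" "e \<in> K" "distinct [a,b,c,d,e]" for a b c d e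
  proof -
    have "set [a,b,c,d,e] \<subseteq> K" using that by simp
    then have "card (set [a,b,c,d,e]) \<le> card K" using finK card_mono by blast
    moreover have "card (set [a,b,c,d,e]) = 5" using distinct_card[OF that(6)] by simp
    ultimately show False using cK by simp
  qed
  from W_split[OF np HW, of "\<lambda>x. finite {y\<in>H. fst y = fst x \<and> f y = f x}"]
  show ?thesis
  proof
    define A where "A = {x\<in>H. finite {y\<in>H. fst y = fst x \<and> f y = f x}}"
    assume "{x\<in>H. finite {y\<in>H. fst y = fst x \<and> f y = f x}} \<in> W"
    then have AW: "A \<in> W" unfolding A_def .
    define A' where "A' = {x\<in>A. infinite {y\<in>A. fst y = fst x}}"
    have A'W: "A' \<in> W" unfolding A'_def using W_shrink[OF np AW] .
    have A'H: "x \<in> H" if "x \<in> A'" for x using that unfolding A'_def A_def by blast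
    have inA': "y \<in> A'" if "x \<in> A'" "y \<in> A" "fst y = fst x" for x y
    proof -
      have "{z\<in>A. fst z = fst y} = {z\<in>A. fst z = fst x}" using that(3) by simp
      then show ?thesis using that unfolding A'_def by simp
    qed
    have finf: "finite {y\<in>A. fst y = n \<and> f y \<le> M}" for n M
    proof -
      have eq: "{y\<in>A. fst y = n \<and> f y \<le> M} = (\<Union>v\<in>{..M}. {y\<in>A. fst y = n \<and> f y = v})" by auto
      have "finite {y\<in>A. fst y = n \<and> f y = v}" for v
      proof (cases "\<exists>y0\<in>A. fst y0 = n \<and> f y0 = v")
        case True
        then obtain y0 where y0: "y0 \<in> A" "fst y0 = n" "f y0 = v" by blast
        then have fy0: "finite {y\<in>H. fst y = fst y0 \<and> f y = f y0}" unfolding A_def by blast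
        show ?thesis
        proof (rule finite_subset[OF _ fy0])
          show "{y\<in>A. fst y = n \<and> f y = v} \<subseteq> {y\<in>H. fst y = fst y0 \<and> f y = f y0}"
            using y0 unfolding A_def by auto
        qed
      next
        case False
        then have "{y\<in>A. fst y = n \<and> f y = v} = {}" by blast
        then show ?thesis by (metis finite.emptyI)
      qed
      then show ?thesis unfolding eq by blast
    qed
    have big: "\<exists>y\<in>A'. fst y = fst x \<and> snd y > M1 \<and> f y > M2" if "x \<in> A'" for x M1 M2
    proof -
      have C: "infinite {y\<in>A. fst y = fst x}" using that unfolding A'_def by blast
      have F: "finite ({y. fst y = fst x \<and> snd y \<le> M1} \<union> {y\<in>A. fst y = fst x \<and> f y \<le> M2})"
        using fin_snd finf by blast
      from avoid[OF C F] obtain y where y: "y \<in> A" "fst y = fst x"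
        "y \<notin> {y. fst y = fst x \<and> snd y \<le> M1} \<union> {y\<in>A. fst y = fst x \<and> f y \<le> M2}" by blast
      have "y \<in> A'" using inA'[OF that y(1,2)] .
      moreover have "snd y > M1" "f y > M2" using y by auto
      ultimately show ?thesis using y(2) by blast
    qed
    obtain x0 where x0: "x0 \<in> A'" using W_ne[OF np A'W] by blast
    obtain z where z: "z \<in> A'" "fst z > fst x0 + snd x0" using W_unbounded[OF np A'W] by blast
    obtain y1 where y1: "y1 \<in> A'" "fst y1 = fst x0" "snd y1 > snd x0" "f y1 > f x0"
      using big[OF x0] by blast
    have "lx x0 y1" using y1 by (simp add: lx_def)
    moreover have "colxy f x0 y1 = 1" using y1 by (simp add: colxy_def rel_def)
    ultimately have k1: "1 \<in> K" using app A'H x0 y1(1) by metis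
    obtain y2 where y2: "y2 \<in> A'" "fst y2 = fst z" "snd y2 > snd x0" "f y2 > f x0"
      using big[OF z(1)] by blast
    have "lx x0 y2" using y2 z by (simp add: lx_def)
    moreover have "colxy f x0 y2 = 10" using y2 z by (simp add: colxy_def rel_def)
    ultimately have k10: "10 \<in> K" using app A'H x0 y2(1) by metis
    obtain x1 where x1: "x1 \<in> A'" "fst x1 = fst x0" "snd x1 > fst z" "f x1 > 0"
      using big[OF x0] by blast
    obtain y3 where y3: "y3 \<in> A'" "fst y3 = fst z" "snd y3 > snd x1" "f y3 > f x1"
      using big[OF z(1)] by blast
    have "lx x1 y3" using y3 x1 z by (simp add: lx_def)
    moreover have "colxy f x1 y3 = 9" using y3 x1 z by (simp add: colxy_def rel_def)
    ultimately have k9: "9 \<in> K" using app A'H x1 y3(1) by metis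
    obtain x2 where x2: "x2 \<in> A'" "fst x2 = fst x0" "snd x2 > fst z + snd z" "f x2 > f z"
      using big[OF x0] by blast
    have "lx x2 z" using x2 z by (simp add: lx_def)
    moreover have "colxy f x2 z = 11" using x2 z by (simp add: colxy_def rel_def)
    ultimately have k11: "11 \<in> K" using app A'H x2(1) z(1) by metis
    have "inj_on f A'"
    proof (rule ccontr)
      assume "\<not> inj_on f A'"
      then obtain u v where uv: "u \<in> A'" "v \<in> A'" "u \<noteq> v" "f u = f v"
        unfolding inj_on_def by blast
      have "\<exists>p q. p \<in> A' \<and> q \<in> A' \<and> lx p q \<and> f p = f q"
        using lx_total[OF uv(3)] uv by metis
      then obtain p q where pq: "p \<in> A'" "q \<in> A'" "lx p q" "f p = f q" by blast
      have e: "colxy f p q \<in> K" using app A'H pq by metis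
      have "colxy f p q \<le> 6 \<and> colxy f p q \<noteq> 1" using pq(4) by (simp add: colxy_def rel_def)
      then have "distinct [1, 9, 10, 11, colxy f p q]" by auto
      from five[OF k1 k9 k10 k11 e this] show False .
    qed
    with A'W show ?thesis by blast
  next
    define B where "B = {x\<in>H. \<not> finite {y\<in>H. fst y = fst x \<and> f y = f x}}"
    assume "{x\<in>H. \<not> finite {y\<in>H. fst y = fst x \<and> f y = f x}} \<in> W"
    then have BW: "B \<in> W" unfolding B_def .
    define B' where "B' = {x\<in>B. infinite {y\<in>B. fst y = fst x}}"
    have B'W: "B' \<in> W" unfolding B'_def using W_shrink[OF np BW] .
    have B'H: "x \<in> H" if "x \<in> B'" for x using that unfolding B'_def B_def by blast
    have inB': "y \<in> B'" if "x \<in> B'" "y \<in> B" "fst y = fst x" for x y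
    proof -
      have "{z\<in>B. fst z = fst y} = {z\<in>B. fst z = fst x}" using that(3) by simp
      then show ?thesis using that unfolding B'_def by simp
    qed
    have partner: "\<exists>y\<in>B'. fst y = fst x \<and> f y = f x \<and> snd y > M" if "x \<in> B'" for x M
    proof -
      define P where "P = {y\<in>H. fst y = fst x \<and> f y = f x}"
      have "x \<in> B" using that unfolding B'_def by blast
      then have Pinf: "infinite P" unfolding P_def B_def by blast
      have PB: "y \<in> B" if "y \<in> P" for y
      proof -
        have eqP: "{z\<in>H. fst z = fst y \<and> f z = f y} = P" using that unfolding P_def by auto
        have yH: "y \<in> H" using that unfolding P_def by blast
        show ?thesis unfolding B_def using yH Pinf eqP by simp
      qed
      from avoid[OF Pinf fin_snd[of "fst x" M]] obtain y where
        y: "y \<in> P" "y \<notin> {y. fst y = fst x \<and> snd y \<le> M}" by blast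
      have yP: "fst y = fst x" "f y = f x" using y(1) unfolding P_def by auto
      have "y \<in> B'" using inB'[OF that PB[OF y(1)] yP(1)] .
      moreover have "snd y > M" using y(2) yP by auto
      ultimately show ?thesis using yP by blast
    qed
    obtain x0 where x0: "x0 \<in> B'" using W_ne[OF np B'W] by blast
    obtain z where z: "z \<in> B'" "fst z > fst x0" using W_unbounded[OF np B'W] by blast
    obtain y0 where y0: "y0 \<in> B'" "fst y0 = fst x0" "f y0 = f x0" "snd y0 > snd x0"
      using partner[OF x0] by blast
    have "lx x0 y0" using y0 by (simp add: lx_def)
    moreover have "colxy f x0 y0 = 0" using y0 by (simp add: colxy_def rel_def)
    ultimately have k0: "0 \<in> K" using app B'H x0 y0(1) by metis
    have cross: "3 + 4 * rel (f x) (f y) \<in> K \<and> (\<exists>e\<le>1. 5 + 4 * rel (f x) (f y) + e \<in> K)"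
      if "x \<in> B'" "y \<in> B'" "fst x < fst y" for x y
    proof -
      note th = that
      obtain y' where y': "y' \<in> B'" "fst y' = fst y" "f y' = f y" "snd y' > snd x"
        using partner[OF th(2)] by blast
      have "lx x y'" using y' th by (simp add: lx_def)
      then have "colxy f x y' \<in> K" using app B'H th(1) y'(1) by metis
      moreover have "colxy f x y' = 5 + 4 * rel (f x) (f y) + (if snd x < fst y then 1 else 0)"
        using y' th by (simp add: colxy_def)
      ultimately have c1a: "5 + 4 * rel (f x) (f y) + (if snd x < fst y then 1 else 0) \<in> K" by simp
      have "(if snd x < fst y then 1 else 0) \<le> (1::nat)" by simp
      with c1a have c1: "\<exists>e\<le>1. 5 + 4 * rel (f x) (f y) + e \<in> K" by blast
      obtain x' where x': "x' \<in> B'" "fst x' = fst x" "f x' = f x" "snd x' > snd y + fst y"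
        using partner[OF th(1)] by blast
      have "lx x' y" using x' th by (simp add: lx_def)
      then have "colxy f x' y \<in> K" using app B'H th(2) x'(1) by metis
      moreover have "colxy f x' y = 3 + 4 * rel (f x) (f y)"
        using x' th by (simp add: colxy_def)
      ultimately show ?thesis using c1 by simp
    qed
    have colconst1: False if "x \<in> B'" "y \<in> B'" "fst x = fst y" "f x < f y" for x y
    proof -
      note th = that
      obtain y' where y': "y' \<in> B'" "fst y' = fst y" "f y' = f y" "snd y' > snd x"
        using partner[OF th(2)] by blast
      have "lx x y'" using y' th by (simp add: lx_def)
      moreover have "colxy f x y' = 1" using y' th by (simp add: colxy_def rel_def)
      ultimately have k1: "1 \<in> K" using app B'H th(1) y'(1) by metis
      obtain x' where x': "x' \<in> B'" "fst x' = fst x" "f x' = f x" "snd x' > snd y"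
        using partner[OF th(1)] by blast
      have "lx y x'" using x' th by (simp add: lx_def)
      moreover have "colxy f y x' = 2" using x' th by (simp add: colxy_def rel_def)
      ultimately have k2: "2 \<in> K" using app B'H th(2) x'(1) by metis
      obtain e where e: "e \<le> 1" "5 + 4 * rel (f x0) (f z) + e \<in> K"
        and k3: "3 + 4 * rel (f x0) (f z) \<in> K" using cross[OF x0 z(1) z(2)] by blast
      have "distinct [0, 1, 2, 3 + 4 * rel (f x0) (f z), 5 + 4 * rel (f x0) (f z) + e]" by simp
      from five[OF k0 k1 k2 k3 e(2) this] show False .
    qed
    have colconst: "f x = f y" if "x \<in> B'" "y \<in> B'" "fst x = fst y" for x y
    proof (rule linorder_cases[of "f x" "f y"])
      assume "f x < f y" from colconst1[OF that this] show ?thesis ..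
    next
      assume "f y < f x" from colconst1[OF that(2,1) _ this] that(3) show ?thesis by simp
    qed simp
    have singlerel: "rel (f x) (f y) = rel (f u) (f v)"
      if hh: "x \<in> B'" "y \<in> B'" "u \<in> B'" "v \<in> B'" "fst x < fst y" "fst u < fst v" for x y u v
    proof (rule ccontr)
      assume ne: "rel (f x) (f y) \<noteq> rel (f u) (f v)"
      obtain e1 where e1: "e1 \<le> 1" "5 + 4 * rel (f x) (f y) + e1 \<in> K"
        and k1: "3 + 4 * rel (f x) (f y) \<in> K" using cross[OF hh(1,2,5)] by blast
      obtain e2 where e2: "e2 \<le> 1" "5 + 4 * rel (f u) (f v) + e2 \<in> K"
        and k2: "3 + 4 * rel (f u) (f v) \<in> K" using cross[OF hh(3,4,6)] by blast
      from five[OF k0 k1 e1(2) k2 e2(2) arith5[OF ne e1(1) e2(1)]] show False .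
    qed
    obtain B'' p where B''W: "B'' \<in> W" and B''s: "B'' \<subseteq> B'" and par: "\<forall>x\<in>B''. f x mod 2 = p"
      and p2: "p < 2"
    proof -
      from W_split[OF np B'W, of "\<lambda>x. even (f x)"] show ?thesis
      proof
        assume "{x\<in>B'. even (f x)} \<in> W"
        then show ?thesis
        proof (rule that[of _ 0])
          show "{x\<in>B'. even (f x)} \<subseteq> B'" by blast
          show "\<forall>x\<in>{x\<in>B'. even (f x)}. f x mod 2 = 0" by (simp add: even_iff_mod_2_eq_zero)
        qed simp
      next
        assume "{x\<in>B'. \<not> even (f x)} \<in> W"
        then show ?thesis
        proof (rule that[of _ 1])
          show "{x\<in>B'. \<not> even (f x)} \<subseteq> B'" by blast
          show "\<forall>x\<in>{x\<in>B'. \<not> even (f x)}. f x mod 2 = 1" by (simp add: odd_iff_mod_2_eq_one)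
        qed simp
      qed
    qed
    show ?thesis
    proof (cases "rel (f x0) (f z) = 0")
      case True
      obtain w where w: "w \<in> B''" using W_ne[OF np B''W] by blast
      have "f x = f w" if "x \<in> B''" for x
      proof (rule linorder_cases[of "fst x" "fst w"])
        assume "fst x < fst w"
        then have "rel (f x) (f w) = 0" using singlerel[OF subsetD[OF B''s that] subsetD[OF B''s w] x0 z(1) \<open>fst x < fst w\<close> z(2)] True that w by simp
        then show ?thesis by (simp add: rel0)
      next
        assume "fst w < fst x"
        then have "rel (f w) (f x) = 0" using singlerel[OF subsetD[OF B''s w] subsetD[OF B''s that] x0 z(1) \<open>fst w < fst x\<close> z(2)] True that w by simp
        then show ?thesis by (simp add: rel0)
      next
        assume "fst x = fst w" then show ?thesis using colconst that w B''s by blast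
      qed
      then show ?thesis using B''W by blast
    next
      case False
      have crossinj: "f x \<noteq> f y" if "x \<in> B''" "y \<in> B''" "fst x \<noteq> fst y" for x y
      proof (cases "fst x < fst y")
        case True
        then have "rel (f x) (f y) \<noteq> 0" using singlerel[OF subsetD[OF B''s that(1)] subsetD[OF B''s that(2)] x0 z(1) \<open>fst x < fst y\<close> z(2)] False that  by simp
        then show ?thesis by (simp add: rel0)
      next
        case False2: False
        then have "fst y < fst x" using that(3) by simp
        then have "rel (f y) (f x) \<noteq> 0" using singlerel[OF subsetD[OF B''s that(2)] subsetD[OF B''s that(1)] x0 z(1) \<open>fst y < fst x\<close> z(2)] False that  by simp
        then show ?thesis by (simp add: rel0)
      qed
      define g where "g n = (if \<exists>x\<in>B''. fst x = n then f (SOME x. x \<in> B'' \<and> fst x = n) else 2*n + (1 - p))" for n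
      have gsome: "(SOME x'. x' \<in> B'' \<and> fst x' = n) \<in> B'' \<and> fst (SOME x'. x' \<in> B'' \<and> fst x' = n) = n"
        if "\<exists>x\<in>B''. fst x = n" for n
        using that by (metis (mono_tags, lifting) someI_ex)
      have gf: "f x = g (fst x)" if "x \<in> B''" for x
      proof -
        have ex: "\<exists>x'\<in>B''. fst x' = fst x" using that by blast
        then have "g (fst x) = f (SOME x'. x' \<in> B'' \<and> fst x' = fst x)" unfolding g_def by simp
        moreover have "f (SOME x'. x' \<in> B'' \<and> fst x' = fst x) = f x"
          using colconst gsome[OF ex] that B''s by blast
        ultimately show ?thesis by simp
      qed
      have "inj g"
      proof (rule injI)
        fix m n assume gmn: "g m = g n"
        show "m = n"
        proof (cases "\<exists>x\<in>B''. fst x = m")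
          case Tm: True
          note sm = gsome[OF Tm]
          show ?thesis
          proof (cases "\<exists>x\<in>B''. fst x = n")
            case Tn: True
            note sn = gsome[OF Tn]
            have "f (SOME x'. x' \<in> B'' \<and> fst x' = m) = f (SOME x'. x' \<in> B'' \<and> fst x' = n)"
              using gmn Tm Tn unfolding g_def by simp
            then show ?thesis using crossinj sm sn by metis
          next
            case Fn: False
            have "g m mod 2 = p" using Tm sm par unfolding g_def by simp
            moreover have "g n = 2*n + (1 - p)" using Fn unfolding g_def by simp
            moreover have "(2*n + (1 - p)) mod 2 = 1 - p" using p2 by (cases "p = 0") simp_all
            ultimately have "p = 1 - p" using gmn by simp
            then have False using p2 by arith
            then show ?thesis ..
          qed
        next
          case Fm: False
          show ?thesis
          proof (cases "\<exists>x\<in>B''. fst x = n")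
            case Tn: True
            note sn = gsome[OF Tn]
            have "g n mod 2 = p" using Tn sn par unfolding g_def by simp
            moreover have "g m = 2*m + (1 - p)" using Fm unfolding g_def by simp
            moreover have "(2*m + (1 - p)) mod 2 = 1 - p" using p2 by (cases "p = 0") simp_all
            ultimately have "p = 1 - p" using gmn by simp
            then have False using p2 by arith
            then show ?thesis ..
          next
            case Fn: False
            have "g n = 2*n + (1 - p)" "g m = 2*m + (1 - p)" using Fn Fm unfolding g_def by simp_all
            then show ?thesis using gmn by simp
          qed
        qed
      qed
      then show ?thesis using B''W gf by blast
    qed
  qed
qed

theorem mainTheorem6:
  fixes W :: "(nat \<times> nat) set set"
  assumes "non_P_point_std W"
    and "weakly_Ramsey 2 4 W"
  shows "three_functions_property W"
  unfolding three_functions_property_def using three_f[OF assms] by blast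

end
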